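(* Let $A\in\mathbb{R}^{n\times n}$, $B\in\mathbb{R}^{n\times m}$ with $(A,B)$ stabilizable, $Q\succ0$, $R\succ0$, $\alpha>1$, $\gamma,\eta\ge0$, $x_k\in\mathbb{R}^n$, and let $\tilde P$, $V$, $J_k$, $Z$, $H_0,H_1,H_2$ be as in the context. The optimization problem (P1): minimize over $F_k\in\mathbb{R}^{m\times n}$, $\delta_k$ the objective $-\delta_k+\gamma\|F_k\|_0+\eta\|F_kx_k\|_0$ subject to $J_k(F_k,\xi;x_k)\le\alpha\big(V(x_k)-V(x(t_k+\xi))\big)$ for all $\xi\in[0,\delta_k]$, is equivalent to the problem (P2): minimize over $f_k\in\mathbb{R}^{mn}$, $\delta_k$ the objective $-\delta_k+\gamma\|f_k\|_0+\eta\|(x_k^T\otimes I)f_k\|_0$ subject to, for all $\xi\in[0,\delta_k)$, $$\tfrac12 f_k^TP_1(\xi)f_k+q_1(\xi)^Tf_k+r_1(\xi)\le0,$$ where $f_k:=\mathrm{vec}(F_k)$ and $$P_1(\xi):=2(x_kx_k^T)\otimes\big(H_2(\xi)+\alpha B^TZ(\xi)^Te^{A^T\xi}\tilde Pe^{A\xi}Z(\xi)B\big),$$ $$q_1(\xi):=2\,\mathrm{vec}\Big(\big(H_1(\xi)^T+\alpha B^TZ(\xi)^Te^{A^T\xi}\tilde Pe^{A\xi}\big)x_kx_k^T\Big),$$ $$r_1(\xi):=x_k^T\big(H_0(\xi)+\alpha(e^{A^T\xi}\tilde Pe^{A\xi}-\tilde P)\big)x_k.$$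
   Context: $\tilde F$ is a fixed gain with $A+B\tilde F$ Hurwitz and $\tilde P\succ0$ solves $(A+B\tilde F)^T\tilde P+\tilde P(A+B\tilde F)+Q+\tilde F^TR\tilde F=0$; $V(x):=x^T\tilde Px$. For $\xi\ge0$, $x(t_k+\xi)$ is the solution of $\dot x=Ax+Bu$ from $x(t_k)=x_k$ with constant input $u=F_kx_k$, and $J_k(F_k,\xi;x_k):=\int_{t_k}^{t_k+\xi}(x^TQx+u^TRu)\,dt$. $Z(\tau):=\int_0^\tau e^{-As}ds$, $H_0(\xi):=\int_0^\xi e^{A^T\tau}Qe^{A\tau}d\tau$, $H_1(\xi):=\int_0^\xi e^{A^T\tau}Qe^{A\tau}Z(\tau)Bd\tau$, $H_2(\xi):=\int_0^\xi(e^{A\tau}Z(\tau)B)^TQ(e^{A\tau}Z(\tau)B)d\tau+\xi R$. $\|\cdot\|_0$ is the number of nonzero entries, $\mathrm{vec}$ stacks columns, $\otimes$ is the Kronecker product, and $I$ is the $m\times m$ identity. *)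

theory Defs
  imports "HOL-Analysis.Analysis"
begin

fun mpow :: "real^'n^'n \<Rightarrow> nat \<Rightarrow> real^'n^'n" where
  "mpow A 0 = mat 1"
| "mpow A (Suc k) = A ** mpow A k"

definition mexp :: "real^'n^'n \<Rightarrow> real \<Rightarrow> real^'n^'n" where
  "mexp A t = (\<Sum>k. ((t ^ k) / fact k) *\<^sub>R mpow A k)"

definition pos_def :: "real^'n^'n \<Rightarrow> bool" where
  "pos_def M \<longleftrightarrow> transpose M = M \<and> (\<forall>x. x \<noteq> 0 \<longrightarrow> x \<bullet> (M *v x) > 0)"

definition hurwitz :: "real^'n^'n \<Rightarrow> bool" where
  "hurwitz M \<longleftrightarrow> (\<forall>(l::complex) (v::complex^'n). v \<noteq> 0 \<and>
      (\<chi> i. \<Sum>j\<in>UNIV. complex_of_real (M $ i $ j) * v $ j) = l *s v \<longrightarrow> Re l < 0)"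

definition stabilizable :: "real^'n^'n \<Rightarrow> real^'m^'n \<Rightarrow> bool" where
  "stabilizable A B \<longleftrightarrow> (\<exists>F::real^'n^'m. hurwitz (A + B ** F))"

definition nnz_vec :: "real^'n \<Rightarrow> nat" where
  "nnz_vec v = card {i. v $ i \<noteq> 0}"

definition nnz_mat :: "real^'n^'m \<Rightarrow> nat" where
  "nnz_mat M = card {(i, j). M $ i $ j \<noteq> 0}"

text \<open>Column-stacking vec: index (j, i) = column j, row i (column-major order,
  the column index being the outer (slow) index).\<close>

definition vecm :: "real^'n^'m \<Rightarrow> real^('n \<times> 'm)" where
  "vecm F = (\<chi> p. F $ snd p $ fst p)"

text \<open>Kronecker product; row/column indices are pairs (outer block index, inner index),
  consistent with vecm.\<close>

definition kron :: "real^'b^'a \<Rightarrow> real^'d^'c \<Rightarrow> real^('b \<times> 'd)^('a \<times> 'c)" where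
  "kron M N = (\<chi> r. \<chi> c. M $ fst r $ fst c * N $ snd r $ snd c)"

definition outer :: "real^'n \<Rightarrow> real^'n^'n" where
  "outer x = (\<chi> i j. x $ i * x $ j)"

definition rowv :: "real^'n \<Rightarrow> real^'n^1" where
  "rowv x = (\<chi> _. x)"

definition Zm :: "real^'n^'n \<Rightarrow> real \<Rightarrow> real^'n^'n" where
  "Zm A \<tau> = integral {0..\<tau>} (\<lambda>s. mexp A (- s))"

definition H0 :: "real^'n^'n \<Rightarrow> real^'n^'n \<Rightarrow> real \<Rightarrow> real^'n^'n" where
  "H0 A Q \<xi> = integral {0..\<xi>} (\<lambda>\<tau>. mexp (transpose A) \<tau> ** Q ** mexp A \<tau>)"

definition H1 :: "real^'n^'n \<Rightarrow> real^'m^'n \<Rightarrow> real^'n^'n \<Rightarrow> real \<Rightarrow> real^'m^'n" where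
  "H1 A B Q \<xi> = integral {0..\<xi>} (\<lambda>\<tau>. mexp (transpose A) \<tau> ** Q ** mexp A \<tau> ** Zm A \<tau> ** B)"

definition H2 :: "real^'n^'n \<Rightarrow> real^'m^'n \<Rightarrow> real^'n^'n \<Rightarrow> real^'m^'m \<Rightarrow> real \<Rightarrow> real^'m^'m" where
  "H2 A B Q R \<xi> = integral {0..\<xi>}
      (\<lambda>\<tau>. transpose (mexp A \<tau> ** Zm A \<tau> ** B) ** Q ** (mexp A \<tau> ** Zm A \<tau> ** B)) + \<xi> *\<^sub>R R"

text \<open>Cost J_k(F, xi; x_k) along a given trajectory xt (time measured from t_k).\<close>

definition Jcost :: "real^'n^'n \<Rightarrow> real^'m^'m \<Rightarrow> (real \<Rightarrow> real^'n) \<Rightarrow> real^'m \<Rightarrow> real \<Rightarrow> real" where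
  "Jcost Q R xt u \<xi> = integral {0..\<xi>} (\<lambda>t. xt t \<bullet> (Q *v xt t) + u \<bullet> (R *v u))"

definition P1m :: "real^'n^'n \<Rightarrow> real^'m^'n \<Rightarrow> real^'n^'n \<Rightarrow> real^'m^'m \<Rightarrow> real^'n^'n \<Rightarrow> real
    \<Rightarrow> real^'n \<Rightarrow> real \<Rightarrow> real^('n \<times> 'm)^('n \<times> 'm)" where
  "P1m A B Q R Pt \<alpha> x \<xi> = 2 *\<^sub>R kron (outer x)
     (H2 A B Q R \<xi> + \<alpha> *\<^sub>R (transpose B ** transpose (Zm A \<xi>) ** mexp (transpose A) \<xi> ** Pt
        ** mexp A \<xi> ** Zm A \<xi> ** B))"

definition q1v :: "real^'n^'n \<Rightarrow> real^'m^'n \<Rightarrow> real^'n^'n \<Rightarrow> real^'n^'n \<Rightarrow> real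
    \<Rightarrow> real^'n \<Rightarrow> real \<Rightarrow> real^('n \<times> 'm)" where
  "q1v A B Q Pt \<alpha> x \<xi> = 2 *\<^sub>R vecm ((transpose (H1 A B Q \<xi>) + \<alpha> *\<^sub>R (transpose B ** transpose (Zm A \<xi>)
        ** mexp (transpose A) \<xi> ** Pt ** mexp A \<xi>)) ** outer x)"

definition r1 :: "real^'n^'n \<Rightarrow> real^'n^'n \<Rightarrow> real^'n^'n \<Rightarrow> real \<Rightarrow> real^'n \<Rightarrow> real \<Rightarrow> real" where
  "r1 A Q Pt \<alpha> x \<xi> = x \<bullet> ((H0 A Q \<xi> + \<alpha> *\<^sub>R (mexp (transpose A) \<xi> ** Pt ** mexp A \<xi> - Pt)) *v x)"

end

theory Submission
  imports Defs
begin


typedef (overloaded) 'a endo = "UNIV :: ('a::euclidean_space \<Rightarrow>\<^sub>L 'a) set" by auto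
setup_lifting type_definition_endo

instantiation endo :: (euclidean_space) real_normed_vector
begin
lift_definition norm_endo :: "'a endo \<Rightarrow> real" is norm .
lift_definition minus_endo :: "'a endo \<Rightarrow> 'a endo \<Rightarrow> 'a endo" is "(-)" .
lift_definition plus_endo :: "'a endo \<Rightarrow> 'a endo \<Rightarrow> 'a endo" is "(+)" .
lift_definition uminus_endo :: "'a endo \<Rightarrow> 'a endo" is "uminus" .
lift_definition zero_endo :: "'a endo" is "0" .
lift_definition scaleR_endo :: "real \<Rightarrow> 'a endo \<Rightarrow> 'a endo" is "scaleR" .
definition dist_endo :: "'a endo \<Rightarrow> 'a endo \<Rightarrow> real"
  where "dist_endo a b = norm (a - b)"
definition uniformity_endo :: "('a endo \<times> 'a endo) filter"
  where "uniformity_endo = (INF e\<in>{0 <..}. principal {(x, y). dist x y < e})"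
definition open_endo :: "'a endo set \<Rightarrow> bool"
  where "open_endo S = (\<forall>x\<in>S. \<forall>\<^sub>F (x', y) in uniformity. x' = x \<longrightarrow> y \<in> S)"
definition sgn_endo :: "'a endo \<Rightarrow> 'a endo"
  where "sgn_endo x = scaleR (inverse (norm x)) x"
instance
  apply standard
  unfolding dist_endo_def open_endo_def sgn_endo_def uniformity_endo_def
  apply (rule refl | (transfer, force simp: algebra_simps norm_triangle_ineq))+
  done
end

instantiation endo :: (euclidean_space) real_normed_algebra_1
begin
lift_definition times_endo :: "'a endo \<Rightarrow> 'a endo \<Rightarrow> 'a endo" is "blinfun_compose" .
lift_definition one_endo :: "'a endo" is "id_blinfun" .
instance
proof
  show "(0::'a endo) \<noteq> 1"
  proof transfer
    obtain b :: 'a where "b \<in> Basis" using nonempty_Basis by blast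
    then have "b \<noteq> 0" by auto
    then show "(0::'a \<Rightarrow>\<^sub>L 'a) \<noteq> id_blinfun"
      by (metis blinfun_apply_id_blinfun blinfun.zero_left)
  qed
  show "norm (1::'a endo) = 1" by transfer simp
qed (transfer; auto intro!: blinfun_eqI simp: blinfun.bilinear_simps norm_blinfun_compose)+
end

lemma Cauchy_endo: "Cauchy X \<Longrightarrow> Cauchy (\<lambda>n. Rep_endo (X n))"
  unfolding Cauchy_def dist_norm dist_endo_def
  by (metis minus_endo.rep_eq norm_endo.rep_eq)

instance endo :: (euclidean_space) banach
proof
  fix X :: "nat \<Rightarrow> 'a endo" assume "Cauchy X"
  then obtain L where L: "(\<lambda>n. Rep_endo (X n)) \<longlonglongrightarrow> L"
    using Cauchy_endo Cauchy_convergent_iff convergent_def by blast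
  have "X \<longlonglongrightarrow> Abs_endo L"
    using L unfolding tendsto_iff dist_norm dist_endo_def
    by (simp add: norm_endo.rep_eq minus_endo.rep_eq Abs_endo_inverse)
  then show "convergent X" by (auto simp: convergent_def)
qed



definition bl :: "real^'n^'n \<Rightarrow> (real^'n) endo" where "bl M = Abs_endo (Blinfun ((*v) M))"
definition mt :: "(real^'n) endo \<Rightarrow> real^'n^'n" where "mt L = matrix (blinfun_apply (Rep_endo L))"

lemma rep_bl: "blinfun_apply (Rep_endo (bl M)) = (*v) M"
  by (simp add: bl_def Abs_endo_inverse bounded_linear_Blinfun_apply)

lemma mt_bl[simp]: "mt (bl M) = M"
  by (simp add: mt_def rep_bl)

lemma bl_mt[simp]: "bl (mt L) = L"
proof -
  have "bounded_linear (blinfun_apply (Rep_endo L))" by (rule blinfun.bounded_linear_right)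
  then have "(*v) (mt L) = blinfun_apply (Rep_endo L)"
    unfolding mt_def using matrix_vector_mul(3) by blast
  then show ?thesis
    by (metis Rep_endo_inverse bl_def blinfun_apply_inverse)
qed

lemma bl_inj: "bl M = bl N \<Longrightarrow> M = N" by (metis mt_bl)

lemma bl_mult: "bl (M ** N) = bl M * bl N"
proof -
  have "Rep_endo (bl (M ** N)) = Rep_endo (bl M * bl N)"
    by (rule blinfun_eqI) (simp add: rep_bl times_endo.rep_eq matrix_vector_mul_assoc)
  then show ?thesis by (simp add: Rep_endo_inject)
qed

lemma bl_one: "bl (mat 1) = 1"
proof -
  have "Rep_endo (bl (mat 1)) = Rep_endo 1"
    by (rule blinfun_eqI) (simp add: rep_bl one_endo.rep_eq)
  then show ?thesis by (simp add: Rep_endo_inject)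
qed

lemma mt_mult: "mt (a * b) = mt a ** mt b"
  by (metis bl_mt bl_mult bl_inj)

lemma mt_one: "mt 1 = mat 1"
  by (metis bl_one mt_bl)

lemma mt_entry: "mt L $ i $ j = blinfun_apply (Rep_endo L) (axis j 1) $ i"
  by (simp add: mt_def matrix_def)

lemma mt_scaleR: "mt (r *\<^sub>R a) = r *\<^sub>R mt a"
  by (simp add: vec_eq_iff mt_entry scaleR_endo.rep_eq blinfun.scaleR_left)

lemma transpose_scaleR: "transpose (r *\<^sub>R (M::real^'n^'m)) = r *\<^sub>R transpose M"
  by (simp add: transpose_def vec_eq_iff)

lemma bounded_linear_mt: "bounded_linear (mt :: (real^'n) endo \<Rightarrow> real^'n^'n)"
proof (rule bounded_linear_intro[where K = "real CARD('n) * real CARD('n)"])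
  fix a b :: "(real^'n) endo" and r :: real
  show "mt (a + b) = mt a + mt b"
    by (simp add: vec_eq_iff mt_entry plus_endo.rep_eq blinfun.add_left)
  show "mt (r *\<^sub>R a) = r *\<^sub>R mt a"
    by (simp add: vec_eq_iff mt_entry scaleR_endo.rep_eq blinfun.scaleR_left)
  have e: "\<bar>mt a $ i $ j\<bar> \<le> norm a" for i j
  proof -
    have "\<bar>mt a $ i $ j\<bar> \<le> norm (blinfun_apply (Rep_endo a) (axis j 1))"
      unfolding mt_entry by (rule component_le_norm_cart)
    also have "\<dots> \<le> norm (Rep_endo a) * norm (axis j (1::real))" by (rule norm_blinfun)
    finally show ?thesis by (simp add: norm_endo.rep_eq)
  qed
  have r: "norm (mt a $ i) \<le> real CARD('n) * norm a" for i
  proof -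
    have "norm (mt a $ i) \<le> (\<Sum>j\<in>UNIV. \<bar>mt a $ i $ j\<bar>)" by (rule norm_le_l1_cart)
    also have "\<dots> \<le> (\<Sum>j\<in>(UNIV::'n set). norm a)" by (rule sum_mono) (rule e)
    finally show ?thesis by simp
  qed
  have "norm (mt a) \<le> (\<Sum>i\<in>UNIV. norm (mt a $ i))"
    unfolding norm_vec_def by (rule L2_set_le_sum) simp
  also have "\<dots> \<le> (\<Sum>i\<in>(UNIV::'n set). real CARD('n) * norm a)" by (rule sum_mono) (rule r)
  finally show "norm (mt a) \<le> norm a * (real CARD('n) * real CARD('n))" by (simp add: algebra_simps)
qed

lemma mt_pow: "mt ((bl A) ^ k) = mpow A k"
  by (induction k) (simp_all add: mt_one mt_mult)

lemma mexp_sums: "(\<lambda>k. ((t ^ k) / fact k) *\<^sub>R mpow A k) sums mt (exp (t *\<^sub>R bl A))"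
proof -
  have "(\<lambda>n. mt ((t *\<^sub>R bl A) ^ n /\<^sub>R fact n)) sums mt (exp (t *\<^sub>R bl A))"
    by (rule bounded_linear.sums[OF bounded_linear_mt exp_converges])
  moreover have "mt ((t *\<^sub>R bl A) ^ n /\<^sub>R fact n) = ((t ^ n) / fact n) *\<^sub>R mpow A n" for n
    by (simp add: mt_scaleR scaleR_power mt_pow divide_inverse_commute)
  ultimately show ?thesis by simp
qed

lemma mexp_eq: "mexp A t = mt (exp (t *\<^sub>R bl A))"
  unfolding mexp_def by (rule sums_unique[OF mexp_sums, symmetric])

lemma mexp_deriv_right: "((mexp A) has_vector_derivative (mexp A t ** A)) (at t within T)"
proof -
  have "((\<lambda>t. mt (exp (t *\<^sub>R bl A))) has_vector_derivative mt (exp (t *\<^sub>R bl A) * bl A)) (at t within T)"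
    using bounded_linear.has_derivative[OF bounded_linear_mt exp_scaleR_has_vector_derivative_right[unfolded has_vector_derivative_def]]
    unfolding has_vector_derivative_def mt_scaleR .
  moreover have "mexp A = (\<lambda>t. mt (exp (t *\<^sub>R bl A)))" by (rule ext) (rule mexp_eq)
  ultimately show ?thesis
    by (simp add: mt_mult)
qed

lemma exp_comm: "exp (t *\<^sub>R X) * X = X * exp (t *\<^sub>R X)"
proof (cases "t = 0")
  case True then show ?thesis by simp
next
  case False
  have "exp (t *\<^sub>R X) * (t *\<^sub>R X) = (t *\<^sub>R X) * exp (t *\<^sub>R X)"
    by (rule exp_times_arg_commute)
  then have "t *\<^sub>R (exp (t *\<^sub>R X) * X) = t *\<^sub>R (X * exp (t *\<^sub>R X))"
    by (simp only: mult_scaleR_left mult_scaleR_right)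
  then show ?thesis using False by simp
qed

lemma mexp_comm: "mexp A t ** A = A ** mexp A t"
proof -
  have "mexp A t ** A = mt (exp (t *\<^sub>R bl A) * bl A)" by (simp add: mexp_eq mt_mult)
  also have "\<dots> = mt (bl A * exp (t *\<^sub>R bl A))" by (simp only: exp_comm)
  also have "\<dots> = A ** mexp A t" by (simp add: mexp_eq mt_mult)
  finally show ?thesis .
qed

lemma mexp_deriv_left: "((mexp A) has_vector_derivative (A ** mexp A t)) (at t within T)"
  using mexp_deriv_right mexp_comm by metis

lemma mexp_zero[simp]: "mexp A 0 = mat 1"
  by (simp add: mexp_eq mt_one)

lemma mexp_add: "mexp A (s + t) = mexp A s ** mexp A t"
  by (simp add: mexp_eq exp_add_commuting scaleR_add_left mt_mult)

lemma mexp_inv1: "mexp A t ** mexp A (-t) = mat 1"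
  by (metis mexp_add mexp_zero add.right_inverse)
lemma mexp_inv2: "mexp A (-t) ** mexp A t = mat 1"
  by (metis mexp_add mexp_zero add.left_inverse)

lemma mpow_comm: "mpow A k ** A = A ** mpow A k"
  by (induction k) (simp_all, metis matrix_mul_assoc)

lemma mpow_transpose: "transpose (mpow A k) = mpow (transpose A) k"
  by (induction k) (simp_all add: matrix_transpose_mul mpow_comm)

lemma bounded_linear_transpose: "bounded_linear (transpose :: real^'n^'m \<Rightarrow> real^'m^'n)"
  by (rule linear_conv_bounded_linear[THEN iffD1]) (auto simp: linear_iff transpose_def vec_eq_iff)

lemma mexp_transpose: "transpose (mexp A t) = mexp (transpose A) t"
proof -
  have "(\<lambda>k. transpose (((t ^ k) / fact k) *\<^sub>R mpow A k)) sums transpose (mexp A t)"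
    unfolding mexp_eq by (rule bounded_linear.sums[OF bounded_linear_transpose mexp_sums])
  then have "(\<lambda>k. ((t ^ k) / fact k) *\<^sub>R mpow (transpose A) k) sums transpose (mexp A t)"
    by (simp add: transpose_scaleR mpow_transpose)
  moreover have "(\<lambda>k. ((t ^ k) / fact k) *\<^sub>R mpow (transpose A) k) sums mexp (transpose A) t"
    unfolding mexp_eq by (rule mexp_sums)
  ultimately show ?thesis by (rule sums_unique2)
qed



lemma bounded_bilinear_mv: "bounded_bilinear ((*v) :: real^'n^'m \<Rightarrow> real^'n \<Rightarrow> real^'m)"
  by (rule bilinear_conv_bounded_bilinear[THEN iffD1])
     (auto simp: bilinear_def linear_iff algebra_simps scaleR_matrix_vector_assoc[symmetric])

lemma mm_add_rdistrib: "((A::real^'n^'m) + B) ** (C::real^'k^'n) = A ** C + B ** C"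
  by (vector matrix_matrix_mult_def sum.distrib[symmetric] field_simps)

lemma mm_scaleR_left: "(r *\<^sub>R (A::real^'n^'m)) ** (C::real^'k^'n) = r *\<^sub>R (A ** C)"
  by (vector matrix_matrix_mult_def sum_distrib_left field_simps)

lemma mm_scaleR_right: "(A::real^'n^'m) ** (r *\<^sub>R (C::real^'k^'n)) = r *\<^sub>R (A ** C)"
  by (vector matrix_matrix_mult_def sum_distrib_left field_simps)

lemma neg_mv: "(- (M::real^'n^'m)) *v v = - (M *v v)"
  by (metis diff_0 matrix_vector_mult_0 matrix_vector_mult_diff_rdistrib)

lemma bounded_bilinear_mm: "bounded_bilinear ((**) :: real^'n^'m \<Rightarrow> real^'k^'n \<Rightarrow> real^'k^'m)"
  by (rule bilinear_conv_bounded_bilinear[THEN iffD1])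
     (auto simp: bilinear_def linear_iff matrix_add_ldistrib mm_add_rdistrib mm_scaleR_left mm_scaleR_right)

lemma mexp_cont: "continuous_on S (mexp A)"
  by (meson continuous_at_imp_continuous_on has_vector_derivative_continuous mexp_deriv_right)

lemma mexp_neg_deriv: "((\<lambda>s. mexp A (-s)) has_vector_derivative (- (mexp A (-s) ** A))) (at s within T)"
proof -
  have "((mexp A \<circ> uminus) has_vector_derivative ((-1) *\<^sub>R (mexp A (-s) ** A))) (at s within T)"
    by (rule vector_diff_chain_within) (auto intro!: derivative_eq_intros mexp_deriv_right)
  then show ?thesis by (simp add: o_def)
qed

lemma mexp_neg_cont: "continuous_on S (\<lambda>s. mexp A (-s))"
  by (intro continuous_on_compose2[OF mexp_cont[of UNIV]] continuous_intros) auto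

lemma Zm_zero[simp]: "Zm A 0 = 0"
  by (simp add: Zm_def)

lemma Zm_deriv: "0 \<le> s \<Longrightarrow> s \<le> t \<Longrightarrow> (Zm A has_vector_derivative mexp A (-s)) (at s within {0..t})"
  unfolding Zm_def[abs_def]
  by (rule integral_has_vector_derivative) (auto intro: mexp_neg_cont)

lemma traj_closed:
  fixes A :: "real^'n^'n" and B :: "real^'m^'n"
  assumes x0: "x 0 = xk"
    and ode: "\<And>t. t \<ge> 0 \<Longrightarrow> (x has_vector_derivative (A *v x t + B *v u)) (at t within {0..})"
    and t: "t \<ge> 0"
  shows "x t = mexp A t *v xk + (mexp A t ** Zm A t ** B) *v u"
proof -
  define y where "y s = mexp A (-s) *v x s - Zm A s *v (B *v u)" for s
  have d: "(y has_vector_derivative 0) (at s within {0..t})" if s: "s \<in> {0..t}" for s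
  proof -
    have dx: "(x has_vector_derivative (A *v x s + B *v u)) (at s within {0..t})"
      using ode[of s] s by (auto intro: has_vector_derivative_within_subset)
    have d1: "((\<lambda>s. mexp A (-s) *v x s) has_vector_derivative
        (mexp A (-s) *v (A *v x s + B *v u) + (- (mexp A (-s) ** A)) *v x s)) (at s within {0..t})"
      by (rule bounded_bilinear.has_vector_derivative[OF bounded_bilinear_mv mexp_neg_deriv dx])
    have d2: "((\<lambda>s. Zm A s *v (B *v u)) has_vector_derivative (mexp A (-s) *v (B *v u))) (at s within {0..t})"
      using bounded_bilinear.has_vector_derivative[OF bounded_bilinear_mv Zm_deriv[of s t A] has_vector_derivative_const[of "B *v u"]] s
      by simp
    have "(y has_vector_derivative
        (mexp A (-s) *v (A *v x s + B *v u) + (- (mexp A (-s) ** A)) *v x s - mexp A (-s) *v (B *v u))) (at s within {0..t})"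
      unfolding y_def[abs_def] by (rule has_vector_derivative_diff[OF d1 d2])
    moreover have "mexp A (-s) *v (A *v x s + B *v u) + (- (mexp A (-s) ** A)) *v x s - mexp A (-s) *v (B *v u) = 0"
      by (simp add: algebra_simps matrix_vector_mul_assoc neg_mv)
    ultimately show ?thesis by simp
  qed
  obtain c where c: "\<And>s. s \<in> {0..t} \<Longrightarrow> y s = c"
    using has_vector_derivative_zero_constant[of "{0..t}" y] d by auto
  have "y t = y 0" using c t by auto
  then have "mexp A (-t) *v x t = xk + Zm A t *v (B *v u)"
    by (simp add: y_def x0) (metis add.commute diff_add_cancel)
  then have "mexp A t *v (mexp A (-t) *v x t) = mexp A t *v (xk + Zm A t *v (B *v u))" by simp
  then show ?thesis
    by (simp add: matrix_vector_mul_assoc mexp_inv1 algebra_simps matrix_mul_assoc)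
qed



lemma sum_pair: "(\<Sum>p\<in>(UNIV::('a::finite \<times> 'b::finite) set). f p) = (\<Sum>a\<in>UNIV. \<Sum>b\<in>UNIV. f (a, b))"
  using sum.cartesian_product[of "\<lambda>a b. f (a, b)" UNIV UNIV] by (simp add: UNIV_Times_UNIV)

lemma L3: "(kron (rowv (x::real^'n)) (mat 1 :: real^'m^'m) *v vecm F) $ r = (F *v x) $ snd r"
proof -
  have aux: "x $ a * (if snd r = b then 1 else 0) * F $ b $ a = (if snd r = b then F $ b $ a * x $ a else 0)" for a b
    by simp
  show ?thesis
    unfolding matrix_vector_mult_def kron_def rowv_def vecm_def mat_def sum_pair
    by (simp add: aux sum.delta)
qed

lemma kv: "(kron (outer x) (G::real^'m^'m) *v vecm (F::real^'n^'m)) $ (a,c) = (\<Sum>b\<in>UNIV. \<Sum>d\<in>UNIV. x$a * x$b * G$c$d * F$d$b)"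
  unfolding matrix_vector_mult_def kron_def outer_def vecm_def sum_pair by simp

lemma L1: "vecm F \<bullet> (kron (outer x) (G::real^'m^'m) *v vecm (F::real^'n^'m)) = (F *v x) \<bullet> (G *v (F *v x))"
proof -
  have "vecm F \<bullet> (kron (outer x) G *v vecm F) =
     (\<Sum>a\<in>UNIV. \<Sum>c\<in>UNIV. \<Sum>b\<in>UNIV. \<Sum>d\<in>UNIV. F$c$a * (x$a * x$b * G$c$d * F$d$b))"
    unfolding inner_vec_def sum_pair kv by (simp add: vecm_def sum_distrib_left)
  also have "\<dots> = (\<Sum>c\<in>UNIV. \<Sum>a\<in>UNIV. \<Sum>b\<in>UNIV. \<Sum>d\<in>UNIV. F$c$a * (x$a * x$b * G$c$d * F$d$b))"
    by (rule sum.swap)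
  also have "\<dots> = (\<Sum>c\<in>UNIV. \<Sum>b\<in>UNIV. \<Sum>a\<in>UNIV. \<Sum>d\<in>UNIV. F$c$a * (x$a * x$b * G$c$d * F$d$b))"
    by (rule sum.cong[OF refl], rule sum.swap)
  also have "\<dots> = (\<Sum>c\<in>UNIV. \<Sum>b\<in>UNIV. \<Sum>d\<in>UNIV. \<Sum>a\<in>UNIV. F$c$a * (x$a * x$b * G$c$d * F$d$b))"
    by (rule sum.cong[OF refl], rule sum.cong[OF refl], rule sum.swap)
  also have "\<dots> = (\<Sum>c\<in>UNIV. \<Sum>d\<in>UNIV. \<Sum>b\<in>UNIV. \<Sum>a\<in>UNIV. F$c$a * (x$a * x$b * G$c$d * F$d$b))"
    by (rule sum.cong[OF refl], rule sum.swap)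
  also have "\<dots> = (\<Sum>c\<in>UNIV. \<Sum>d\<in>UNIV. \<Sum>b\<in>UNIV. \<Sum>a\<in>UNIV. F$c$a * x$a * (G$c$d * (F$d$b * x$b)))"
    by (intro sum.cong refl) (simp only: ac_simps)
  also have "\<dots> = (F *v x) \<bullet> (G *v (F *v x))"
    by (simp add: inner_vec_def matrix_vector_mult_def sum_distrib_left sum_distrib_right)
  finally show ?thesis .
qed

lemma cm: "((C::real^'n^'m) ** outer x) $ i $ j = (\<Sum>k\<in>UNIV. C$i$k * (x$k * x$j))"
  unfolding matrix_matrix_mult_def outer_def by simp

lemma L2: "vecm ((C::real^'n^'m) ** outer x) \<bullet> vecm F = (C *v x) \<bullet> (F *v x)"
proof -
  have "vecm (C ** outer x) \<bullet> vecm F = (\<Sum>j\<in>UNIV. \<Sum>i\<in>UNIV. \<Sum>k\<in>UNIV. C$i$k * (x$k * x$j) * F$i$j)"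
    unfolding inner_vec_def sum_pair by (simp add: vecm_def cm sum_distrib_right)
  also have "\<dots> = (\<Sum>i\<in>UNIV. \<Sum>j\<in>UNIV. \<Sum>k\<in>UNIV. C$i$k * (x$k * x$j) * F$i$j)"
    by (rule sum.swap)
  also have "\<dots> = (\<Sum>i\<in>UNIV. \<Sum>j\<in>UNIV. \<Sum>k\<in>UNIV. (C$i$k * x$k) * (F$i$j * x$j))"
    by (intro sum.cong refl) (simp only: ac_simps)
  also have "\<dots> = (C *v x) \<bullet> (F *v x)"
    by (simp add: inner_vec_def matrix_vector_mult_def sum_distrib_left sum_distrib_right)
  finally show ?thesis .
qed

lemma nnz1: "nnz_mat F = nnz_vec (vecm F)"
proof -
  have "{p. vecm F $ p \<noteq> 0} = prod.swap ` {(i, j). F $ i $ j \<noteq> 0}"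
    by (auto simp: vecm_def image_iff)
  then show ?thesis
    unfolding nnz_mat_def nnz_vec_def by (simp add: card_image)
qed

lemma nnz2: "nnz_vec ((F::real^'n^'m) *v x) = nnz_vec (kron (rowv x) (mat 1 :: real^'m^'m) *v vecm F)"
proof -
  have "{r. (kron (rowv x) (mat 1 :: real^'m^'m) *v vecm F) $ r \<noteq> 0} = (UNIV::1 set) \<times> {i. (F *v x) $ i \<noteq> 0}"
    by (auto simp: L3)
  then show ?thesis
    unfolding nnz_vec_def by (simp add: card_cartesian_product)
qed



lemma tr_l: "(transpose M *v v) \<bullet> w = v \<bullet> ((M::real^'n^'m) *v w)"
  by (metis dot_lmul_matrix transpose_matrix_vector)

lemma tr_r: "v \<bullet> (transpose (M::real^'n^'m) *v w) = (M *v v) \<bullet> w"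
  by (metis tr_l inner_commute)

lemma sym_q: "transpose P = P \<Longrightarrow> v \<bullet> ((P::real^'n^'n) *v w) = w \<bullet> (P *v v)"
  by (metis tr_r inner_commute)

lemma cont_mm: "continuous_on S f \<Longrightarrow> continuous_on S g \<Longrightarrow> continuous_on S (\<lambda>t. (f t :: real^'n^'m) ** (g t :: real^'k^'n))"
  by (rule bounded_bilinear.continuous_on[OF bounded_bilinear_mm])

lemma cont_tr: "continuous_on S f \<Longrightarrow> continuous_on S (\<lambda>t. transpose (f t :: real^'n^'m))"
  by (rule bounded_linear.continuous_on[OF bounded_linear_transpose])

lemma Zm_cont: "continuous_on {0..\<xi>} (Zm A)"
proof -
  have "continuous (at s within {0..\<xi>}) (Zm A)" if "s \<in> {0..\<xi>}" for s
    using Zm_deriv[of s \<xi> A] that by (auto intro: has_vector_derivative_continuous)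
  then show ?thesis by (simp add: continuous_on_eq_continuous_within)
qed

lemma bl_form: "bounded_linear (\<lambda>M::real^'n^'m. v \<bullet> (M *v w))"
  by (rule linear_conv_bounded_linear[THEN iffD1])
     (auto simp: linear_iff algebra_simps inner_add_right scaleR_matrix_vector_assoc[symmetric])

lemma integral_form:
  assumes "continuous_on {0..\<xi>} (h :: real \<Rightarrow> real^'n^'m)"
  shows "integral {0..\<xi>} (\<lambda>t. v \<bullet> (h t *v w)) = v \<bullet> (integral {0..\<xi>} h *v w)"
  using integral_linear[OF integrable_continuous_interval[OF assms] bl_form[of v w]]
  by (simp add: o_def)

lemma cont_form:
  assumes "continuous_on S (h :: real \<Rightarrow> real^'n^'m)"
  shows "continuous_on S (\<lambda>t. v \<bullet> (h t *v w))"
  by (rule bounded_linear.continuous_on[OF bl_form assms])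

lemma cost:
  fixes A :: "real^'n^'n" and B :: "real^'m^'n"
  assumes Qs: "transpose Q = Q"
    and traj: "\<And>t. 0 \<le> t \<Longrightarrow> x t = mexp A t *v xk + (mexp A t ** Zm A t ** B) *v u"
    and \<xi>: "0 \<le> \<xi>"
  shows "Jcost Q R x u \<xi> = xk \<bullet> (H0 A Q \<xi> *v xk) + 2 * (xk \<bullet> (H1 A B Q \<xi> *v u)) + u \<bullet> (H2 A B Q R \<xi> *v u)"
proof -
  define h0 where "h0 t = mexp (transpose A) t ** Q ** mexp A t" for t
  define h1 where "h1 t = h0 t ** Zm A t ** B" for t
  define h2 where "h2 t = transpose (mexp A t ** Zm A t ** B) ** Q ** (mexp A t ** Zm A t ** B)" for t
  have c0: "continuous_on {0..\<xi>} h0" unfolding h0_def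
    by (intro cont_mm mexp_cont continuous_on_const)
  have c1: "continuous_on {0..\<xi>} h1" unfolding h1_def h0_def
    by (intro cont_mm mexp_cont continuous_on_const Zm_cont)
  have c2: "continuous_on {0..\<xi>} h2" unfolding h2_def
    by (intro cont_mm cont_tr mexp_cont continuous_on_const Zm_cont)
  have pw: "x t \<bullet> (Q *v x t) + u \<bullet> (R *v u) =
      xk \<bullet> (h0 t *v xk) + 2 * (xk \<bullet> (h1 t *v u)) + u \<bullet> (h2 t *v u) + u \<bullet> (R *v u)"
    if t: "t \<in> {0..\<xi>}" for t
  proof -
    define a where "a = mexp A t *v xk"
    define b where "b = (mexp A t ** Zm A t ** B) *v u"
    have x: "x t = a + b" using traj[of t] t by (simp add: a_def b_def)
    have e0: "xk \<bullet> (h0 t *v xk) = a \<bullet> (Q *v a)"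
      by (simp add: h0_def a_def mexp_transpose[symmetric] matrix_vector_mul_assoc[symmetric] tr_r matrix_transpose_mul del: transpose_matrix_vector)
    have e1: "xk \<bullet> (h1 t *v u) = a \<bullet> (Q *v b)"
      by (simp add: h1_def h0_def a_def b_def mexp_transpose[symmetric] matrix_vector_mul_assoc[symmetric] tr_r matrix_transpose_mul del: transpose_matrix_vector)
    have e2: "u \<bullet> (h2 t *v u) = b \<bullet> (Q *v b)"
      by (simp add: h2_def b_def matrix_vector_mul_assoc[symmetric] tr_r matrix_transpose_mul del: transpose_matrix_vector)
    have s: "b \<bullet> (Q *v a) = a \<bullet> (Q *v b)" using sym_q[OF Qs] by metis
    show ?thesis
      unfolding x e0 e1 e2 by (simp add: algebra_simps inner_add_left inner_add_right s)
  qed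
  have "Jcost Q R x u \<xi> = integral {0..\<xi>} (\<lambda>t.
      xk \<bullet> (h0 t *v xk) + 2 * (xk \<bullet> (h1 t *v u)) + u \<bullet> (h2 t *v u) + u \<bullet> (R *v u))"
    unfolding Jcost_def by (rule integral_cong) (rule pw)
  also have "\<dots> = integral {0..\<xi>} (\<lambda>t. xk \<bullet> (h0 t *v xk)) + 2 * integral {0..\<xi>} (\<lambda>t. xk \<bullet> (h1 t *v u))
      + integral {0..\<xi>} (\<lambda>t. u \<bullet> (h2 t *v u)) + \<xi> * (u \<bullet> (R *v u))"
  proof -
    have i0: "(\<lambda>t. xk \<bullet> (h0 t *v xk)) integrable_on {0..\<xi>}"
      by (intro integrable_continuous_interval cont_form c0)
    have i1: "(\<lambda>t. xk \<bullet> (h1 t *v u)) integrable_on {0..\<xi>}"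
      by (intro integrable_continuous_interval cont_form c1)
    have i1': "(\<lambda>t. 2 * (xk \<bullet> (h1 t *v u))) integrable_on {0..\<xi>}"
      using integrable_on_mult_right[OF i1, of 2] by simp
    have i2: "(\<lambda>t. u \<bullet> (h2 t *v u)) integrable_on {0..\<xi>}"
      by (intro integrable_continuous_interval cont_form c2)
    have "integral {0..\<xi>} (\<lambda>t.
      xk \<bullet> (h0 t *v xk) + 2 * (xk \<bullet> (h1 t *v u)) + u \<bullet> (h2 t *v u) + u \<bullet> (R *v u))
      = integral {0..\<xi>} (\<lambda>t. xk \<bullet> (h0 t *v xk) + 2 * (xk \<bullet> (h1 t *v u)) + u \<bullet> (h2 t *v u))
        + integral {0..\<xi>} (\<lambda>t. u \<bullet> (R *v u))"
      by (rule Henstock_Kurzweil_Integration.integral_add) (intro Henstock_Kurzweil_Integration.integrable_add i0 i1' i2 integrable_continuous_interval continuous_on_const)+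
    also have "integral {0..\<xi>} (\<lambda>t. xk \<bullet> (h0 t *v xk) + 2 * (xk \<bullet> (h1 t *v u)) + u \<bullet> (h2 t *v u))
      = integral {0..\<xi>} (\<lambda>t. xk \<bullet> (h0 t *v xk) + 2 * (xk \<bullet> (h1 t *v u))) + integral {0..\<xi>} (\<lambda>t. u \<bullet> (h2 t *v u))"
      by (rule Henstock_Kurzweil_Integration.integral_add) (intro Henstock_Kurzweil_Integration.integrable_add i0 i1' i2)+
    also have "integral {0..\<xi>} (\<lambda>t. xk \<bullet> (h0 t *v xk) + 2 * (xk \<bullet> (h1 t *v u)))
      = integral {0..\<xi>} (\<lambda>t. xk \<bullet> (h0 t *v xk)) + integral {0..\<xi>} (\<lambda>t. 2 * (xk \<bullet> (h1 t *v u)))"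
      by (rule Henstock_Kurzweil_Integration.integral_add) (rule i0, rule i1')
    also have "integral {0..\<xi>} (\<lambda>t. 2 * (xk \<bullet> (h1 t *v u))) = 2 * integral {0..\<xi>} (\<lambda>t. xk \<bullet> (h1 t *v u))"
      by (rule integral_mult[symmetric]) (rule i1)
    also have "integral {0..\<xi>} (\<lambda>t. u \<bullet> (R *v u)) = \<xi> * (u \<bullet> (R *v u))"
      using \<xi> by (simp add: content_real)
    finally show ?thesis .
  qed
  also have "\<dots> = xk \<bullet> (H0 A Q \<xi> *v xk) + 2 * (xk \<bullet> (H1 A B Q \<xi> *v u)) + u \<bullet> (H2 A B Q R \<xi> *v u)"
    unfolding H0_def H1_def H2_def h0_def[symmetric] h1_def[symmetric] h2_def[symmetric]
      integral_form[OF c0] integral_form[OF c1] integral_form[OF c2]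
    by (simp add: algebra_simps inner_add_right scaleR_matrix_vector_assoc[symmetric])
  finally show ?thesis .
qed



lemma vecm_add: "vecm (M + N) = vecm M + vecm N" by (simp add: vecm_def vec_eq_iff)
lemma vecm_scaleR: "vecm (r *\<^sub>R M) = r *\<^sub>R vecm M" by (simp add: vecm_def vec_eq_iff)

lemma close_gap:
  fixes g :: "real \<Rightarrow> real"
  assumes c: "continuous_on {0..\<delta>} g" and d: "0 < \<delta>" and h: "\<forall>\<xi>\<in>{0..<\<delta>}. g \<xi> \<le> 0"
  shows "g \<delta> \<le> 0"
  using continuous_le_on_closure[of "{0..<\<delta>}" g \<delta> 0] c d h by simp

lemma traj_cont:
  assumes "\<And>t. t \<ge> 0 \<Longrightarrow> (x has_vector_derivative (x' t)) (at t within {0..})"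
  shows "continuous_on {0..\<delta>} x"
proof -
  have "continuous (at s within {0..}) x" if "s \<in> {0..\<delta>}" for s
    using assms[of s] that by (auto intro: has_vector_derivative_continuous)
  then have "continuous (at s within {0..\<delta>}) x" if "s \<in> {0..\<delta>}" for s
    using that continuous_within_subset[of s "{0..}" x "{0..\<delta>}"] by auto
  then show ?thesis by (simp add: continuous_on_eq_continuous_within)
qed

theorem theorem3:
  fixes A :: "real^'n^'n" and B :: "real^'m^'n" and Q :: "real^'n^'n" and R :: "real^'m^'m"
    and Ft :: "real^'n^'m" and Pt :: "real^'n^'n"
    and \<alpha> \<gamma> \<eta> :: real and xk :: "real^'n"
    and xtraj :: "real^'n^'m \<Rightarrow> real \<Rightarrow> real^'n"
  assumes stab: "stabilizable A B"
    and Q: "pos_def Q" and R: "pos_def R"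
    and \<alpha>: "\<alpha> > 1" and \<gamma>: "\<gamma> \<ge> 0" and \<eta>: "\<eta> \<ge> 0"
    and Ft: "hurwitz (A + B ** Ft)"
    and Pt: "pos_def Pt"
    and lyap: "transpose (A + B ** Ft) ** Pt + Pt ** (A + B ** Ft) + Q + transpose Ft ** R ** Ft = 0"
    and traj0: "\<And>F. xtraj F 0 = xk"
    and trajODE: "\<And>F t. t \<ge> 0 \<Longrightarrow>
        (xtraj F has_vector_derivative (A *v xtraj F t + B *v (F *v xk))) (at t within {0..})"
  shows "\<forall>(F::real^'n^'m) (\<delta>::real).
      ((\<forall>\<xi>\<in>{0..\<delta>}. Jcost Q R (xtraj F) (F *v xk) \<xi>
            \<le> \<alpha> * (xk \<bullet> (Pt *v xk) - xtraj F \<xi> \<bullet> (Pt *v xtraj F \<xi>)))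
       \<longleftrightarrow>
       (\<forall>\<xi>\<in>{0..<\<delta>}. (1/2) * (vecm F \<bullet> (P1m A B Q R Pt \<alpha> xk \<xi> *v vecm F))
            + q1v A B Q Pt \<alpha> xk \<xi> \<bullet> vecm F + r1 A Q Pt \<alpha> xk \<xi> \<le> 0))
    \<and> (- \<delta> + \<gamma> * real (nnz_mat F) + \<eta> * real (nnz_vec (F *v xk))
       = - \<delta> + \<gamma> * real (nnz_vec (vecm F)) + \<eta> * real (nnz_vec (kron (rowv xk) (mat 1) *v vecm F)))"
proof (intro allI conjI)
  fix F :: "real^'n^'m" and \<delta> :: real
  show "- \<delta> + \<gamma> * real (nnz_mat F) + \<eta> * real (nnz_vec (F *v xk))
       = - \<delta> + \<gamma> * real (nnz_vec (vecm F)) + \<eta> * real (nnz_vec (kron (rowv xk) (mat 1) *v vecm F))"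
    using nnz1[of F] nnz2[of F xk] by simp
  have Qs: "transpose Q = Q" using Q by (simp add: pos_def_def)
  have Ps: "transpose Pt = Pt" using Pt by (simp add: pos_def_def)
  define u where "u = F *v xk"
  define x where "x = xtraj F"
  have traj: "x t = mexp A t *v xk + (mexp A t ** Zm A t ** B) *v u" if "0 \<le> t" for t
    unfolding x_def u_def by (rule traj_closed[OF traj0 trajODE that])
  define g where "g \<xi> = Jcost Q R x u \<xi> - \<alpha> * (xk \<bullet> (Pt *v xk) - x \<xi> \<bullet> (Pt *v x \<xi>))" for \<xi>
  have key: "(1/2) * (vecm F \<bullet> (P1m A B Q R Pt \<alpha> xk \<xi> *v vecm F))
            + q1v A B Q Pt \<alpha> xk \<xi> \<bullet> vecm F + r1 A Q Pt \<alpha> xk \<xi> = g \<xi>" if \<xi>: "0 \<le> \<xi>" for \<xi>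
  proof -
    define E where "E = mexp A \<xi>"
    define Z where "Z = Zm A \<xi>"
    define a where "a = E *v xk"
    define b where "b = (E ** Z ** B) *v u"
    have xe: "x \<xi> = a + b" using traj[OF \<xi>] by (simp add: a_def b_def E_def Z_def)
    have at1: "u \<bullet> ((transpose B ** transpose Z ** mexp (transpose A) \<xi> ** Pt ** E ** Z ** B) *v u) = b \<bullet> (Pt *v b)"
      by (simp add: b_def E_def mexp_transpose[symmetric] matrix_vector_mul_assoc[symmetric] tr_r del: transpose_matrix_vector)
    have at2: "((transpose B ** transpose Z ** mexp (transpose A) \<xi> ** Pt ** E) *v xk) \<bullet> u = b \<bullet> (Pt *v a)"
      by (simp add: a_def b_def E_def mexp_transpose[symmetric] matrix_vector_mul_assoc[symmetric] tr_l tr_r inner_commute del: transpose_matrix_vector)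
    have at3: "xk \<bullet> ((mexp (transpose A) \<xi> ** Pt ** E) *v xk) = a \<bullet> (Pt *v a)"
      by (simp add: a_def E_def mexp_transpose[symmetric] matrix_vector_mul_assoc[symmetric] tr_r del: transpose_matrix_vector)
    have at4: "(transpose (H1 A B Q \<xi>) *v xk) \<bullet> u = xk \<bullet> (H1 A B Q \<xi> *v u)"
      by (rule tr_l)
    have s: "b \<bullet> (Pt *v a) = a \<bullet> (Pt *v b)" using sym_q[OF Ps] by metis
    have p1: "(1/2) * (vecm F \<bullet> (P1m A B Q R Pt \<alpha> xk \<xi> *v vecm F))
        = u \<bullet> (H2 A B Q R \<xi> *v u) + \<alpha> * (b \<bullet> (Pt *v b))"
      unfolding P1m_def scaleR_matrix_vector_assoc[symmetric] inner_scaleR_right L1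
      by (simp add: u_def[symmetric] E_def[symmetric] Z_def[symmetric] at1[symmetric]
          matrix_vector_mult_add_rdistrib inner_add_right scaleR_matrix_vector_assoc[symmetric])
    have p2: "q1v A B Q Pt \<alpha> xk \<xi> \<bullet> vecm F = 2 * (xk \<bullet> (H1 A B Q \<xi> *v u)) + 2 * \<alpha> * (a \<bullet> (Pt *v b))"
      unfolding q1v_def vecm_scaleR inner_scaleR_left L2
      by (simp add: u_def[symmetric] E_def[symmetric] Z_def[symmetric] at2[symmetric] at4[symmetric] s[symmetric]
          matrix_vector_mult_add_rdistrib inner_add_left scaleR_matrix_vector_assoc[symmetric] del: transpose_matrix_vector)
    have p3: "r1 A Q Pt \<alpha> xk \<xi> = xk \<bullet> (H0 A Q \<xi> *v xk) + \<alpha> * (a \<bullet> (Pt *v a) - xk \<bullet> (Pt *v xk))"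
      unfolding r1_def
      by (simp add: E_def[symmetric] at3[symmetric] matrix_vector_mult_add_rdistrib matrix_vector_mult_diff_rdistrib
          inner_add_right inner_diff_right scaleR_matrix_vector_assoc[symmetric])
    have J: "Jcost Q R x u \<xi> = xk \<bullet> (H0 A Q \<xi> *v xk) + 2 * (xk \<bullet> (H1 A B Q \<xi> *v u)) + u \<bullet> (H2 A B Q R \<xi> *v u)"
      by (rule cost[OF Qs traj \<xi>])
    show ?thesis
      unfolding p1 p2 p3 g_def J xe
      by (simp add: inner_add_left inner_add_right matrix_vector_right_distrib s algebra_simps)
  qed
  have g0: "g 0 = 0"
    by (simp add: g_def Jcost_def x_def traj0)
  have gc: "continuous_on {0..\<delta>} g"
  proof -
    have xc: "continuous_on {0..\<delta>} x"
      unfolding x_def by (rule traj_cont[OF trajODE])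
    have fc: "continuous_on {0..\<delta>} (\<lambda>t. x t \<bullet> (Q *v x t) + u \<bullet> (R *v u))"
      by (intro continuous_intros xc bounded_linear.continuous_on[OF matrix_vector_mul_bounded_linear])
    have "continuous_on {0..\<delta>} (\<lambda>\<xi>. Jcost Q R x u \<xi>)"
      unfolding Jcost_def by (rule indefinite_integral_continuous_1[OF integrable_continuous_interval[OF fc]])
    then show ?thesis unfolding g_def
      by (intro continuous_intros xc bounded_linear.continuous_on[OF matrix_vector_mul_bounded_linear])
  qed
  have lhs: "(\<forall>\<xi>\<in>{0..\<delta>}. Jcost Q R (xtraj F) (F *v xk) \<xi>
            \<le> \<alpha> * (xk \<bullet> (Pt *v xk) - xtraj F \<xi> \<bullet> (Pt *v xtraj F \<xi>))) \<longleftrightarrow> (\<forall>\<xi>\<in>{0..\<delta>}. g \<xi> \<le> 0)"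
    by (simp add: g_def x_def u_def)
  have rhs: "(\<forall>\<xi>\<in>{0..<\<delta>}. (1/2) * (vecm F \<bullet> (P1m A B Q R Pt \<alpha> xk \<xi> *v vecm F))
            + q1v A B Q Pt \<alpha> xk \<xi> \<bullet> vecm F + r1 A Q Pt \<alpha> xk \<xi> \<le> 0) \<longleftrightarrow> (\<forall>\<xi>\<in>{0..<\<delta>}. g \<xi> \<le> 0)"
    using key by auto
  have "(\<forall>\<xi>\<in>{0..\<delta>}. g \<xi> \<le> 0) \<longleftrightarrow> (\<forall>\<xi>\<in>{0..<\<delta>}. g \<xi> \<le> 0)"
  proof
    assume "\<forall>\<xi>\<in>{0..\<delta>}. g \<xi> \<le> 0" then show "\<forall>\<xi>\<in>{0..<\<delta>}. g \<xi> \<le> 0" by auto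
  next
    assume h: "\<forall>\<xi>\<in>{0..<\<delta>}. g \<xi> \<le> 0"
    show "\<forall>\<xi>\<in>{0..\<delta>}. g \<xi> \<le> 0"
    proof
      fix \<xi> assume "\<xi> \<in> {0..\<delta>}"
      then consider "\<xi> \<in> {0..<\<delta>}" | "\<xi> = \<delta>" "\<delta> = 0" | "\<xi> = \<delta>" "0 < \<delta>" by force
      then show "g \<xi> \<le> 0"
      proof cases
        case 1 then show ?thesis using h by auto
      next
        case 2 then show ?thesis using g0 by simp
      next
        case 3 then show ?thesis using close_gap[OF gc _ h] by simp
      qed
    qed
  qed
  then show "(\<forall>\<xi>\<in>{0..\<delta>}. Jcost Q R (xtraj F) (F *v xk) \<xi>
            \<le> \<alpha> * (xk \<bullet> (Pt *v xk) - xtraj F \<xi> \<bullet> (Pt *v xtraj F \<xi>)))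
       \<longleftrightarrow>
       (\<forall>\<xi>\<in>{0..<\<delta>}. (1/2) * (vecm F \<bullet> (P1m A B Q R Pt \<alpha> xk \<xi> *v vecm F))
            + q1v A B Q Pt \<alpha> xk \<xi> \<bullet> vecm F + r1 A Q Pt \<alpha> xk \<xi> \<le> 0)"
    using lhs rhs by blast
qed


end
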